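(* Let $s_0,t_0\ge 1$ be real numbers and let $\mathcal T$ be the infinite rooted tree of nodes generated from $(s_0,t_0)$ by the recursive rule described in the context. Then the set of accumulation points in $\mathbb R^2$ of the set of locations of the nodes of $\mathcal T$ is exactly the closed segment with extremities $(-1,s_0)$ and $(1,t_0)$, i.e. the set $\{(x,\,\tfrac{s_0+t_0}{2}+\tfrac{t_0-s_0}{2}x): x\in[-1,1]\}$.
   Context: Points of $\mathbb R^2$ are written $(x,y)$ (abscissa = space, ordinate = time). Given real numbers $s_0,t_0\ge 1$, a tree $\mathcal T$ is built recursively. Each node has a location $(x,y)\in\mathbb R^2$, a depth $d\in\mathbb N$ (the number of its ancestors that are split nodes), and a pair of real parameters $(s,t)$. The root is at $(0,0)$, has depth $0$ and parameters $(s_0,t_0)$. A node at $(x,y)$ of depth $d$ with parameters $(s,t)$ is: - a delay node if $s\ge 2$ and $t\ge 2$; it then has exactly one child, located at $(x,\,y+2^{-d})$, of depth $d$, with parameters $(s-1,\,t-1)$; - a split node otherwise (i.e. if $s<2$ or $t<2$); it then has exactly two children, both of depth $d+1$: a left child at $(x-2^{-(d+1)},\,y+2^{-(d+1)})$ with parameters $(2s-1,\,s+t-1)$, and a right child at $(x+2^{-(d+1)},\,y+2^{-(d+1)})$ with parameters $(s+t-1,\,2t-1)$. The recursion never stops, so $\mathcal T$ is infinite; each node is joined to its children by straight edges. *)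

theory Defs
  imports "HOL-Analysis.Analysis"
begin

text \<open>tree_node s0 t0 p d s t: there is a node of the tree generated from (s0,t0)
  located at p = (x,y), of depth d, with parameters (s,t).\<close>
inductive tree_node :: "real \<Rightarrow> real \<Rightarrow> real \<times> real \<Rightarrow> nat \<Rightarrow> real \<Rightarrow> real \<Rightarrow> bool"
  for s0 t0 :: real where
  root: "tree_node s0 t0 (0, 0) 0 s0 t0"
| delay: "\<lbrakk>tree_node s0 t0 (x, y) d s t; s \<ge> 2; t \<ge> 2\<rbrakk>
     \<Longrightarrow> tree_node s0 t0 (x, y + (1/2) ^ d) d (s - 1) (t - 1)"
| split_left: "\<lbrakk>tree_node s0 t0 (x, y) d s t; s < 2 \<or> t < 2\<rbrakk>
     \<Longrightarrow> tree_node s0 t0 (x - (1/2) ^ (d + 1), y + (1/2) ^ (d + 1)) (d + 1) (2 * s - 1) (s + t - 1)"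
| split_right: "\<lbrakk>tree_node s0 t0 (x, y) d s t; s < 2 \<or> t < 2\<rbrakk>
     \<Longrightarrow> tree_node s0 t0 (x + (1/2) ^ (d + 1), y + (1/2) ^ (d + 1)) (d + 1) (s + t - 1) (2 * t - 1)"

definition node_locations :: "real \<Rightarrow> real \<Rightarrow> (real \<times> real) set" where
  "node_locations s0 t0 = {p. \<exists>d s t. tree_node s0 t0 p d s t}"

end

theory Submission
  imports Defs
begin

definition lf :: "real \<Rightarrow> real \<Rightarrow> real \<Rightarrow> real" where
  "lf s0 t0 x = (s0 + t0) / 2 + (t0 - s0) / 2 * x"

definition BB :: "real \<Rightarrow> real \<Rightarrow> real" where
  "BB s0 t0 = s0 + t0 + 3 + 2 * \<bar>s0 - t0\<bar>"

lemma half_pow_mult: "(1/2::real)^n * 2^n = 1"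
  by (simp add: power_mult_distrib[symmetric])

lemma half_pow_mult2: "(2::real)^n * (1/2)^n = 1"
  by (simp add: power_mult_distrib[symmetric])

lemma inv_params:
  assumes "tree_node s0 t0 p d s t" "s0 \<ge> 1" "t0 \<ge> 1"
  shows "1 \<le> s \<and> 1 \<le> t \<and> s - t = s0 - t0 \<and> s \<le> BB s0 t0 \<and> t \<le> BB s0 t0"
  using assms
proof (induction rule: tree_node.induct)
  case root
  then show ?case by (simp add: BB_def)
next
  case (delay x y d s t)
  then show ?case by auto
next
  case (split_left x y d s t)
  then show ?case by (auto simp: BB_def split: abs_split)
next
  case (split_right x y d s t)
  then show ?case by (auto simp: BB_def split: abs_split)
qed

lemma inv_geom:
  assumes "tree_node s0 t0 p d s t" "s0 \<ge> 1" "t0 \<ge> 1"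
  shows "-1 \<le> fst p - (1/2)^d \<and> fst p + (1/2)^d \<le> 1 \<and>
         snd p + (s + t) / 2 * (1/2)^d = lf s0 t0 (fst p) \<and> 0 \<le> snd p"
  using assms
proof (induction rule: tree_node.induct)
  case root
  then show ?case by (simp add: lf_def)
next
  case (delay x y d s t)
  have gen: "\<And>h::real. y + h + (s - 1 + (t - 1)) / 2 * h = y + (s + t) / 2 * h"
    by (simp add: field_simps)
  then have eq: "y + (1/2)^d + (s - 1 + (t - 1)) / 2 * (1/2)^d = lf s0 t0 x"
  proof -
    have "y + (s + t) / 2 * (1/2)^d = lf s0 t0 x" using delay.IH delay.prems by simp
    with gen[of "(1/2)^d"] show ?thesis by linarith
  qed
  then show ?case using delay.IH delay.prems by simp
next
  case (split_left x y d s t)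
  have st: "s - t = s0 - t0" using inv_params[OF split_left.hyps(1) split_left.prems] by simp
  have hp: "(0::real) \<le> (1/2)^d" "(1/2::real)^(d+1) = (1/2)^d / 2" by simp_all
  have I: "-1 \<le> x - (1/2)^d" "x + (1/2)^d \<le> 1" "y + (s+t)/2*(1/2)^d = lf s0 t0 x" "0 \<le> y"
    using split_left.IH[OF split_left.prems] by simp_all
  note IHs = I hp
  have "x - (1/2)^(d+1) + (1/2)^(d+1) \<le> 1" using IHs by linarith
  moreover have "-1 \<le> x - (1/2)^(d+1) - (1/2)^(d+1)" using IHs by linarith
  moreover have "y + (1/2)^(d+1) + (2 * s - 1 + (s + t - 1)) / 2 * (1/2)^(d+1) = lf s0 t0 (x - (1/2)^(d+1))"
  proof -
    have e: "y + (s + t) / 2 * (1/2)^d = lf s0 t0 x" using IHs by linarith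
    have gen: "\<And>h::real. y + (s + t) / 2 * h = lf s0 t0 x \<Longrightarrow>
       y + h/2 + (2 * s - 1 + (s + t - 1)) / 2 * (h/2) = lf s0 t0 (x - h/2)"
    proof -
      fix h :: real
      assume a: "y + (s + t) / 2 * h = lf s0 t0 x"
      have yy: "y = lf s0 t0 x - (s + t) / 2 * h" using a by linarith
      have tt: "t = s - s0 + t0" using st by linarith
      then show "y + h/2 + (2 * s - 1 + (s + t - 1)) / 2 * (h/2) = lf s0 t0 (x - h/2)"
        unfolding yy tt lf_def by (simp add: field_simps)
    qed
    show ?thesis using gen[OF e] hp(2) by simp
  qed
  moreover have "0 \<le> y + (1/2)^(d+1)" using IHs by linarith
  ultimately show ?case by simp
next
  case (split_right x y d s t)
  have st: "s - t = s0 - t0" using inv_params[OF split_right.hyps(1) split_right.prems] by simp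
  have hp: "(0::real) \<le> (1/2)^d" "(1/2::real)^(d+1) = (1/2)^d / 2" by simp_all
  have I: "-1 \<le> x - (1/2)^d" "x + (1/2)^d \<le> 1" "y + (s+t)/2*(1/2)^d = lf s0 t0 x" "0 \<le> y"
    using split_right.IH[OF split_right.prems] by simp_all
  note IHs = I hp
  have "x + (1/2)^(d+1) + (1/2)^(d+1) \<le> 1" using IHs by linarith
  moreover have "-1 \<le> x + (1/2)^(d+1) - (1/2)^(d+1)" using IHs by linarith
  moreover have "y + (1/2)^(d+1) + (s + t - 1 + (2 * t - 1)) / 2 * (1/2)^(d+1) = lf s0 t0 (x + (1/2)^(d+1))"
  proof -
    have e: "y + (s + t) / 2 * (1/2)^d = lf s0 t0 x" using IHs by linarith
    have gen: "\<And>h::real. y + (s + t) / 2 * h = lf s0 t0 x \<Longrightarrow>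
       y + h/2 + (s + t - 1 + (2 * t - 1)) / 2 * (h/2) = lf s0 t0 (x + h/2)"
    proof -
      fix h :: real
      assume a: "y + (s + t) / 2 * h = lf s0 t0 x"
      have yy: "y = lf s0 t0 x - (s + t) / 2 * h" using a by linarith
      have tt: "t = s - s0 + t0" using st by linarith
      then show "y + h/2 + (s + t - 1 + (2 * t - 1)) / 2 * (h/2) = lf s0 t0 (x + h/2)"
        unfolding yy tt lf_def by (simp add: field_simps)
    qed
    show ?thesis using gen[OF e] hp(2) by simp
  qed
  moreover have "0 \<le> y + (1/2)^(d+1)" using IHs by linarith
  ultimately show ?case by simp
qed

lemma inv_int:
  assumes "tree_node s0 t0 p d s t"
  shows "fst p * 2^d \<in> \<int> \<and> snd p * 2^d \<in> \<int>"
  using assms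
proof (induction rule: tree_node.induct)
  case root
  then show ?case by simp
next
  case (delay x y d s t)
  have "(y + (1/2)^d) * 2^d = y * 2^d + 1" by (simp add: algebra_simps half_pow_mult half_pow_mult2)
  then show ?case using delay by simp
next
  case (split_left x y d s t)
  have "(x - (1/2)^(d+1)) * 2^(d+1) = 2 * (x * 2^d) - 1"
    using half_pow_mult[of "d+1"] by (simp add: algebra_simps)
  moreover have "(y + (1/2)^(d+1)) * 2^(d+1) = 2 * (y * 2^d) + 1"
    using half_pow_mult[of "d+1"] by (simp add: algebra_simps)
  ultimately show ?case using split_left by simp
next
  case (split_right x y d s t)
  have "(x + (1/2)^(d+1)) * 2^(d+1) = 2 * (x * 2^d) + 1"
    using half_pow_mult[of "d+1"] by (simp add: algebra_simps)
  moreover have "(y + (1/2)^(d+1)) * 2^(d+1) = 2 * (y * 2^d) + 1"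
    using half_pow_mult[of "d+1"] by (simp add: algebra_simps)
  ultimately show ?case using split_right by simp
qed

lemma reach_split_aux:
  "\<And>y s t. s \<le> real n \<Longrightarrow> tree_node s0 t0 (x, y) d s t \<Longrightarrow>
     \<exists>y' s' t'. tree_node s0 t0 (x, y') d s' t' \<and> (s' < 2 \<or> t' < 2)"
proof (induction n)
  case 0
  then show ?case by force
next
  case (Suc n)
  show ?case
  proof (cases "s < 2 \<or> t < 2")
    case True
    then show ?thesis using Suc.prems by blast
  next
    case False
    then have "tree_node s0 t0 (x, y + (1/2)^d) d (s - 1) (t - 1)"
      using tree_node.delay[OF Suc.prems(2)] by simp
    moreover have "s - 1 \<le> real n" using Suc.prems(1) by simp
    ultimately show ?thesis using Suc.IH by blast
  qed
qed

lemma reach_split: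
  assumes "tree_node s0 t0 (x, y) d s t"
  shows "\<exists>y' s' t'. tree_node s0 t0 (x, y') d s' t' \<and> (s' < 2 \<or> t' < 2)"
  using reach_split_aux[of s "nat \<lceil>s\<rceil>", OF _ assms]
  by (meson of_nat_ceiling)

lemma cover:
  assumes "-1 \<le> x0" "x0 \<le> 1"
  shows "\<exists>x y s t. tree_node s0 t0 (x, y) d s t \<and> \<bar>x - x0\<bar> \<le> (1/2)^d"
proof (induction d)
  case 0
  have "tree_node s0 t0 (0, 0) 0 s0 t0" by (rule tree_node.root)
  then show ?case using assms by force
next
  case (Suc d)
  then obtain x y s t where n: "tree_node s0 t0 (x, y) d s t" and c: "\<bar>x - x0\<bar> \<le> (1/2)^d"
    by blast
  obtain y' s' t' where n': "tree_node s0 t0 (x, y') d s' t'" and sp: "s' < 2 \<or> t' < 2"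
    using reach_split[OF n] by blast
  have hp: "(1/2::real)^(Suc d) = (1/2)^d / 2" "(1/2::real)^(d+1) = (1/2)^d / 2" by simp_all
  show ?case
  proof (cases "x0 \<le> x")
    case True
    have "tree_node s0 t0 (x - (1/2)^(d+1), y' + (1/2)^(d+1)) (d + 1) (2 * s' - 1) (s' + t' - 1)"
      by (rule tree_node.split_left[OF n' sp])
    moreover have "\<bar>x - (1/2)^(d+1) - x0\<bar> \<le> (1/2)^(Suc d)"
    proof -
      have c2: "x - x0 \<le> (1/2)^d" "x0 - x \<le> (1/2)^d" using c by (auto simp: abs_le_iff)
      have "-((1/2)^(Suc d)) \<le> x - (1/2)^(d+1) - x0" "x - (1/2)^(d+1) - x0 \<le> (1/2)^(Suc d)"
        using c2 True hp by linarith+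
      then show ?thesis by (simp only: abs_le_iff) (metis minus_le_iff)
    qed
    ultimately show ?thesis by fastforce
  next
    case False
    have "tree_node s0 t0 (x + (1/2)^(d+1), y' + (1/2)^(d+1)) (d + 1) (s' + t' - 1) (2 * t' - 1)"
      by (rule tree_node.split_right[OF n' sp])
    moreover have "\<bar>x + (1/2)^(d+1) - x0\<bar> \<le> (1/2)^(Suc d)"
    proof -
      have c2: "x - x0 \<le> (1/2)^d" "x0 - x \<le> (1/2)^d" using c by (auto simp: abs_le_iff)
      have "-((1/2)^(Suc d)) \<le> x + (1/2)^(d+1) - x0" "x + (1/2)^(d+1) - x0 \<le> (1/2)^(Suc d)"
        using c2 False hp by linarith+
      then show ?thesis by (simp only: abs_le_iff) (metis minus_le_iff)
    qed
    ultimately show ?thesis by fastforce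
  qed
qed

lemma grid_finite:
  "finite {p::real\<times>real. fst p * 2^N \<in> \<int> \<and> \<bar>fst p\<bar> \<le> 1 \<and> snd p * 2^N \<in> \<int> \<and> 0 \<le> snd p \<and> snd p \<le> M}"
proof -
  let ?K = "(2::int)^N"
  let ?K' = "\<lceil>M * 2^N\<rceil>"
  let ?f = "\<lambda>(i::int, j::int). (of_int i / 2^N :: real, of_int j / 2^N :: real)"
  have "{p::real\<times>real. fst p * 2^N \<in> \<int> \<and> \<bar>fst p\<bar> \<le> 1 \<and> snd p * 2^N \<in> \<int> \<and> 0 \<le> snd p \<and> snd p \<le> M}
        \<subseteq> ?f ` ({-?K..?K} \<times> {0..?K'})"
  proof
    fix p :: "real \<times> real"
    assume "p \<in> {p::real\<times>real. fst p * 2^N \<in> \<int> \<and> \<bar>fst p\<bar> \<le> 1 \<and> snd p * 2^N \<in> \<int> \<and> 0 \<le> snd p \<and> snd p \<le> M}"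
    then have h: "fst p * 2^N \<in> \<int>" "\<bar>fst p\<bar> \<le> 1" "snd p * 2^N \<in> \<int>" "0 \<le> snd p" "snd p \<le> M"
      by auto
    obtain i where i: "fst p * 2^N = of_int i" using h(1) Ints_cases by blast
    obtain j where j: "snd p * 2^N = of_int j" using h(3) Ints_cases by blast
    have pos: "(0::real) < 2^N" by simp
    have "\<bar>fst p * 2^N\<bar> \<le> 2^N" using h(2) pos by (simp add: abs_mult)
    then have "\<bar>of_int i\<bar> \<le> (2::real)^N" using i by simp
    then have "\<bar>i\<bar> \<le> ?K"
      by (metis of_int_abs of_int_le_iff of_int_numeral of_int_power)
    then have ii: "i \<in> {-?K..?K}" by auto
    have "snd p * 2^N \<le> M * 2^N" using h(5) pos by simp
    then have "of_int j \<le> M * 2^N" using j by simp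
    then have "j \<le> ?K'" using ceiling_mono by fastforce
    moreover have "0 \<le> j" using j h(4) pos
      by (metis of_int_0_le_iff zero_le_mult_iff less_imp_le)
    ultimately have jj: "j \<in> {0..?K'}" by auto
    have "p = ?f (i, j)" using i j pos by (auto simp: prod_eq_iff field_simps)
    then show "p \<in> ?f ` ({-?K..?K} \<times> {0..?K'})" using ii jj by blast
  qed
  then show ?thesis by (rule finite_subset) auto
qed


lemma seg_char:
  fixes s0 t0 :: real
  shows "closed_segment (-1, s0) (1, t0) = {(x, lf s0 t0 x) | x. -1 \<le> x \<and> x \<le> 1}"
proof
  show "closed_segment (-1, s0) (1, t0) \<subseteq> {(x, lf s0 t0 x) | x. -1 \<le> x \<and> x \<le> 1}"
  proof
    fix p :: "real \<times> real" assume "p \<in> closed_segment (-1, s0) (1, t0)"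
    then obtain u :: real where u: "0 \<le> u" "u \<le> 1" "p = (1 - u) *\<^sub>R (-1, s0) + u *\<^sub>R (1, t0)"
      unfolding closed_segment_def by blast
    have "p = (2 * u - 1, lf s0 t0 (2 * u - 1))" unfolding u(3) lf_def by (simp add: field_simps)
    moreover have "-1 \<le> 2 * u - 1" "2 * u - 1 \<le> 1" using u by auto
    ultimately show "p \<in> {(x, lf s0 t0 x) | x. -1 \<le> x \<and> x \<le> 1}" by blast
  qed
next
  show "{(x, lf s0 t0 x) | x. -1 \<le> x \<and> x \<le> 1} \<subseteq> closed_segment (-1, s0) (1, t0)"
  proof
    fix p :: "real \<times> real" assume "p \<in> {(x, lf s0 t0 x) | x. -1 \<le> x \<and> x \<le> 1}"
    then obtain x where x: "-1 \<le> x" "x \<le> 1" "p = (x, lf s0 t0 x)" by blast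
    define u where "u = (x + 1) / 2"
    have "p = (1 - u) *\<^sub>R (-1, s0) + u *\<^sub>R (1, t0)"
      using x(3) by (simp add: u_def lf_def field_simps)
    moreover have "0 \<le> u" "u \<le> 1" using x u_def by auto
    ultimately show "p \<in> closed_segment (-1, s0) (1, t0)" unfolding closed_segment_def by blast
  qed
qed

lemma dist_le_abs: "dist (a::real, b::real) (c, d) \<le> \<bar>a - c\<bar> + \<bar>b - d\<bar>"
  unfolding dist_Pair_Pair dist_real_def power2_abs by (rule sqrt_sum_squares_le_sum_abs)

lemma dist_vert: "dist (a::real, b::real) (a, d) = \<bar>b - d\<bar>"
  by (simp add: dist_Pair_Pair dist_real_def)

lemma node_facts:
  assumes "tree_node s0 t0 (x, y) d s t" "s0 \<ge> 1" "t0 \<ge> 1"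
  shows "-1 \<le> x" "x \<le> 1" "lf s0 t0 x - y = (s + t) / 2 * (1/2)^d"
    "(s + t) / 2 * (1/2)^d \<le> BB s0 t0 * (1/2)^d" "0 < (s + t) / 2 * (1/2)^d" "0 \<le> y"
proof -
  note P = inv_params[OF assms] and G = inv_geom[OF assms]
  have hp: "(0::real) < (1/2)^d" by simp
  have G1: "-1 \<le> x - (1/2)^d" "x + (1/2)^d \<le> 1" using G by auto
  show "-1 \<le> x" "x \<le> 1" using G1 hp by linarith+
  show "lf s0 t0 x - y = (s + t) / 2 * (1/2)^d" using G by auto
  show "0 \<le> y" using G by auto
  have "(s + t) / 2 \<le> BB s0 t0" using P by auto
  then show "(s + t) / 2 * (1/2)^d \<le> BB s0 t0 * (1/2)^d" using hp by (simp add: mult_right_mono)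
  show "0 < (s + t) / 2 * (1/2)^d" using P hp by simp
qed

lemma lf_bound:
  assumes "s0 \<ge> 1" "t0 \<ge> 1" "-1 \<le> x" "x \<le> 1"
  shows "lf s0 t0 x \<le> s0 + t0"
proof -
  have "(t0 - s0) * x \<le> \<bar>(t0 - s0) * x\<bar>" by simp
  also have "\<dots> = \<bar>t0 - s0\<bar> * \<bar>x\<bar>" by (simp add: abs_mult)
  also have "\<dots> \<le> \<bar>t0 - s0\<bar> * 1" using assms by (intro mult_left_mono) auto
  also have "\<dots> \<le> s0 + t0" using assms by (simp add: abs_le_iff)
  finally have h: "(t0 - s0) * x \<le> s0 + t0" .
  show ?thesis using h unfolding lf_def by (simp add: field_simps)
qed

lemma lf_diff: "\<bar>lf s0 t0 x - lf s0 t0 x0\<bar> = \<bar>t0 - s0\<bar> / 2 * \<bar>x - x0\<bar>"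
proof -
  have eq: "lf s0 t0 x - lf s0 t0 x0 = (t0 - s0) / 2 * (x - x0)" unfolding lf_def by (simp add: field_simps)
  show ?thesis unfolding eq by (simp add: abs_mult)
qed

lemma islimpt_restrict:
  assumes "p islimpt S" "0 < r"
  shows "p islimpt (S \<inter> ball p r)"
  unfolding islimpt_def
proof (intro allI impI)
  fix T assume T: "p \<in> T" "open T"
  then have "p \<in> T \<inter> ball p r" "open (T \<inter> ball p r)" using assms(2) by auto
  then obtain y where "y \<in> S" "y \<in> T \<inter> ball p r" "y \<noteq> p"
    using assms(1) unfolding islimpt_def by blast
  then show "\<exists>y\<in>S \<inter> ball p r. y \<in> T \<and> y \<noteq> p" by blast
qed

theorem theorem1:
  fixes s0 t0 :: real
  assumes "s0 \<ge> 1" and "t0 \<ge> 1"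
  shows "{p. p islimpt node_locations s0 t0} = closed_segment (-1, s0) (1, t0)"
proof
  define S where "S = node_locations s0 t0"
  define L where "L = closed_segment (-1::real, s0) (1, t0)"
  have Bpos: "BB s0 t0 > 0" using assms unfolding BB_def by (smt (verit) abs_ge_zero)
  show "{p. p islimpt node_locations s0 t0} \<subseteq> closed_segment (-1, s0) (1, t0)"
  proof
    fix p assume "p \<in> {p. p islimpt node_locations s0 t0}"
    then have lim: "p islimpt S" unfolding S_def by simp
    show "p \<in> closed_segment (-1, s0) (1, t0)"
    proof (rule ccontr)
      assume np: "p \<notin> closed_segment (-1, s0) (1, t0)"
      define \<delta> where "\<delta> = infdist p L"
      have dpos: "\<delta> > 0" unfolding \<delta>_def L_def
        by (rule infdist_pos_not_in_closed[OF closed_segment _ np]) simp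
      obtain N where N: "(1/2::real)^N < \<delta> / 2 / BB s0 t0"
        using real_arch_pow_inv[of "\<delta> / 2 / BB s0 t0" "1/2::real"] dpos Bpos by auto
      then have NB: "BB s0 t0 * (1/2)^N < \<delta> / 2" using Bpos by (simp add: field_simps)
      let ?G = "{p::real\<times>real. fst p * 2^N \<in> \<int> \<and> \<bar>fst p\<bar> \<le> 1 \<and> snd p * 2^N \<in> \<int> \<and> 0 \<le> snd p \<and> snd p \<le> s0 + t0}"
      have sub: "S \<inter> ball p (\<delta> / 2) \<subseteq> ?G"
      proof
        fix z assume z: "z \<in> S \<inter> ball p (\<delta> / 2)"
        then obtain x y d s t where zz: "z = (x, y)" "tree_node s0 t0 (x, y) d s t"
          unfolding S_def node_locations_def by (cases z) auto
        note F = node_facts[OF zz(2) assms]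
        have qL: "(x, lf s0 t0 x) \<in> L" unfolding L_def seg_char using F by auto
        have dz: "dist p z < \<delta> / 2" using z by (simp add: dist_commute)
        have "\<delta> \<le> dist p (x, lf s0 t0 x)" unfolding \<delta>_def by (rule infdist_le[OF qL])
        also have "\<dots> \<le> dist p z + dist z (x, lf s0 t0 x)" by (rule dist_triangle)
        also have "dist z (x, lf s0 t0 x) = (s + t) / 2 * (1/2)^d"
          using zz(1) dist_vert F(3) F(5) by simp
        finally have "\<delta> / 2 < BB s0 t0 * (1/2)^d" using dz F(4) by linarith
        then have "BB s0 t0 * (1/2)^N < BB s0 t0 * (1/2)^d" using NB by linarith
        then have "(1/2::real)^N < (1/2)^d" using Bpos by simp
        then have dN: "d < N" by (simp add: power_strict_decreasing_iff)
        have I: "x * 2^d \<in> \<int>" "y * 2^d \<in> \<int>" using inv_int[OF zz(2)] by auto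
        have pw: "(2::real)^N = 2^d * 2^(N-d)" using dN by (simp add: power_add[symmetric])
        have A: "x * 2^N = (x * 2^d) * 2^(N-d)" "y * 2^N = (y * 2^d) * 2^(N-d)" unfolding pw by simp_all
        have p2: "(2::real)^(N-d) \<in> \<int>" by (intro Ints_power) simp
        have "x * 2^N \<in> \<int>" "y * 2^N \<in> \<int>" unfolding A using I p2 by (simp_all add: Ints_mult)
        moreover have "y \<le> s0 + t0" using lf_bound[OF assms F(1) F(2)] F(3) F(5) by linarith
        ultimately show "z \<in> ?G" using zz(1) F by auto
      qed
      have fin: "finite (S \<inter> ball p (\<delta> / 2))"
        by (rule finite_subset[OF sub grid_finite])
      have "p islimpt (S \<inter> ball p (\<delta> / 2))" using islimpt_restrict[OF lim] dpos by simp
      then show False using islimpt_finite[OF fin] by blast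
    qed
  qed
  show "closed_segment (-1, s0) (1, t0) \<subseteq> {p. p islimpt node_locations s0 t0}"
  proof
    fix q :: "real \<times> real" assume "q \<in> closed_segment (-1, s0) (1, t0)"
    then obtain x0 where x0: "-1 \<le> x0" "x0 \<le> 1" "q = (x0, lf s0 t0 x0)"
      unfolding seg_char by blast
    show "q \<in> {p. p islimpt node_locations s0 t0}"
      unfolding mem_Collect_eq islimpt_approachable
    proof (intro allI impI)
      fix e :: real assume e: "0 < e"
      define C where "C = 2 + BB s0 t0 + \<bar>t0 - s0\<bar>"
      have Cpos: "C > 0" using Bpos by (simp add: C_def)
      obtain d where d: "(1/2::real)^d < e / C"
        using real_arch_pow_inv[of "e / C" "1/2::real"] e Cpos by auto
      then have dC: "C * (1/2)^d < e" using Cpos by (simp add: field_simps)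
      obtain x y s t where n: "tree_node s0 t0 (x, y) d s t" and c: "\<bar>x - x0\<bar> \<le> (1/2)^d"
        using cover[OF x0(1) x0(2)] by blast
      note F = node_facts[OF n assms]
      have zS: "(x, y) \<in> node_locations s0 t0" unfolding node_locations_def using n by blast
      have ne: "(x, y) \<noteq> q"
      proof
        assume "(x, y) = q"
        then have "x = x0" "y = lf s0 t0 x0" using x0(3) by auto
        then show False using F(3) F(5) by simp
      qed
      have hp: "(0::real) \<le> (1/2)^d" by simp
      have "dist (x, y) q \<le> \<bar>x - x0\<bar> + \<bar>y - lf s0 t0 x0\<bar>" using x0(3) dist_le_abs by simp
      also have "\<bar>y - lf s0 t0 x0\<bar> \<le> \<bar>lf s0 t0 x - y\<bar> + \<bar>lf s0 t0 x - lf s0 t0 x0\<bar>" by linarith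
      also have "\<bar>lf s0 t0 x - lf s0 t0 x0\<bar> \<le> \<bar>t0 - s0\<bar> * (1/2)^d"
      proof -
        have "\<bar>t0 - s0\<bar> / 2 * \<bar>x - x0\<bar> \<le> \<bar>t0 - s0\<bar> * \<bar>x - x0\<bar>" by (simp add: mult_right_mono)
        also have "\<dots> \<le> \<bar>t0 - s0\<bar> * (1/2)^d" using c by (simp add: mult_left_mono)
        finally show ?thesis using lf_diff[of s0 t0 x x0] by linarith
      qed
      also have "\<bar>lf s0 t0 x - y\<bar> \<le> BB s0 t0 * (1/2)^d"
      proof -
        have "lf s0 t0 x - y > 0" using F(3) F(5) by linarith
        then have "\<bar>lf s0 t0 x - y\<bar> = lf s0 t0 x - y" by simp
        then show ?thesis using F(3) F(4) by linarith
      qed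
      finally have "dist (x, y) q \<le> C * (1/2)^d" using c unfolding C_def by (simp add: algebra_simps)
      then have "dist (x, y) q < e" using dC by linarith
      then show "\<exists>x'\<in>node_locations s0 t0. x' \<noteq> q \<and> dist x' q < e" using zS ne by blast
    qed
  qed
qed

end
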